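(* Let $G$ be the cycle with vertices $u,v,w$ and edges $uv,vw,wu$, and let $H$ have OD-pairs $(u,w),(u,v),(w,v)$. Take two classes: class 1 consists of $I_{(u,v)}$ with $\lambda(I_{(u,v)})=1.5$; class 2 consists of $I_{(u,w)}\cup I_{(w,v)}$ with $\lambda(I_{(u,w)})=\lambda(I_{(w,v)})=1$. Class 1 costs: $c_{(u,w)}(x)=x$, $c_{(w,v)}(x)=x+48$, $c_{(u,v)}(x)=24x+7$. Class 2 costs: $c_{(u,w)}(x)=22x$, $c_{(w,v)}(x)=22x$, $c_{(w,u)}(x)=x$, $c_{(u,v)}(x)=x+26$, $c_{(v,w)}(x)=x$ (costs on arcs not used by any route of a class are arbitrary nonnegative continuous strictly increasing). Let $\sigma$ have class 1 users on the route $u\to v$ and class 2 users on the routes $u\to w$ and $w\to v$ respectively; let $\hat\sigma$ have class 1 users on the route $u\to w\to v$, users of $I_{(u,w)}$ on $u\to v\to w$ and users of $I_{(w,v)}$ on $w\to u\to v$. Then $\sigma$ and $\hat\sigma$ are both equilibria, and they induce different flows (e.g. on arc $(u,v)$ the flows are $1.5$ and $2$). In particular multiple equilibrium flows can occur on a ring with only two classes of users.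
   Context: Model: the directed version of $G$ has the six arcs $(u,v),(v,u),(v,w),(w,v),(u,w),(w,u)$; routes of an OD-pair $(o,d)$ are the directed $(o,d)$-paths. Users form a bounded interval with Lebesgue measure $\lambda$; the flow on an arc is the measure of users whose route contains it; a user's cost for a route is the sum over its arcs of his (class-dependent) cost function evaluated at the arc flow; an equilibrium is a strategy profile in which every user's route has minimal cost among the routes of his OD-pair. *)

theory Defs
  imports "HOL-Analysis.Analysis"
begin

datatype node = U | V | W

type_synonym arc = "node \<times> node"

definition G_arcs :: "arc set" where
  "G_arcs = {(x, y). x \<noteq> y}"

text \<open>A directed path is given by its (distinct) vertex sequence; its arcs are the
  consecutive pairs.\<close>
definition route_arcs :: "node list \<Rightarrow> arc set" where
  "route_arcs p = set (zip p (tl p))"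

definition is_route :: "node \<Rightarrow> node \<Rightarrow> node list \<Rightarrow> bool" where
  "is_route s t p \<longleftrightarrow> distinct p \<and> 2 \<le> length p \<and> hd p = s \<and> last p = t
      \<and> route_arcs p \<subseteq> G_arcs"

text \<open>Users form the set I (a bounded interval of reals, Lebesgue measure);
  od i is the OD-pair of user i, sigma i his route.\<close>
definition strategy_profile :: "real set \<Rightarrow> (real \<Rightarrow> arc) \<Rightarrow> (real \<Rightarrow> node list) \<Rightarrow> bool" where
  "strategy_profile I od \<sigma> \<longleftrightarrow>
     (\<forall>i\<in>I. is_route (fst (od i)) (snd (od i)) (\<sigma> i)) \<and>
     (\<forall>a. {i\<in>I. a \<in> route_arcs (\<sigma> i)} \<in> sets lebesgue)"

definition arc_flow :: "real set \<Rightarrow> (real \<Rightarrow> node list) \<Rightarrow> arc \<Rightarrow> real" where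
  "arc_flow I \<sigma> a = measure lebesgue {i\<in>I. a \<in> route_arcs (\<sigma> i)}"

definition route_cost :: "(nat \<Rightarrow> arc \<Rightarrow> real \<Rightarrow> real) \<Rightarrow> nat \<Rightarrow> (arc \<Rightarrow> real) \<Rightarrow> node list \<Rightarrow> real" where
  "route_cost c k f p = (\<Sum>a\<in>route_arcs p. c k a (f a))"

definition equilibrium ::
  "real set \<Rightarrow> (real \<Rightarrow> arc) \<Rightarrow> (real \<Rightarrow> nat) \<Rightarrow> (nat \<Rightarrow> arc \<Rightarrow> real \<Rightarrow> real)
     \<Rightarrow> (real \<Rightarrow> node list) \<Rightarrow> bool" where
  "equilibrium I od cls c \<sigma> \<longleftrightarrow> strategy_profile I od \<sigma> \<and>
     (\<forall>i\<in>I. \<forall>p. is_route (fst (od i)) (snd (od i)) p \<longrightarrow>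
        route_cost c (cls i) (arc_flow I \<sigma>) (\<sigma> i) \<le> route_cost c (cls i) (arc_flow I \<sigma>) p)"

definition I_uv :: "real set" where "I_uv = {0..<3/2}"
definition I_uw :: "real set" where "I_uw = {3/2..<5/2}"
definition I_wv :: "real set" where "I_wv = {5/2..<7/2}"

definition users :: "real set" where "users = I_uv \<union> I_uw \<union> I_wv"

definition od_ex :: "real \<Rightarrow> arc" where
  "od_ex i = (if i \<in> I_uv then (U, V) else if i \<in> I_uw then (U, W) else (W, V))"

definition cls_ex :: "real \<Rightarrow> nat" where
  "cls_ex i = (if i \<in> I_uv then 1 else 2)"

definition sigma_ex :: "real \<Rightarrow> node list" where
  "sigma_ex i = (if i \<in> I_uv then [U, V] else if i \<in> I_uw then [U, W] else [W, V])"

definition sigma_hat_ex :: "real \<Rightarrow> node list" where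
  "sigma_hat_ex i = (if i \<in> I_uv then [U, W, V] else if i \<in> I_uw then [U, V, W] else [W, U, V])"

definition specified_costs :: "(nat \<Rightarrow> arc \<Rightarrow> real \<Rightarrow> real) \<Rightarrow> bool" where
  "specified_costs c \<longleftrightarrow>
     c 1 (U, W) = (\<lambda>x. x) \<and> c 1 (W, V) = (\<lambda>x. x + 48) \<and> c 1 (U, V) = (\<lambda>x. 24 * x + 7) \<and>
     c 2 (U, W) = (\<lambda>x. 22 * x) \<and> c 2 (W, V) = (\<lambda>x. 22 * x) \<and> c 2 (W, U) = (\<lambda>x. x) \<and>
     c 2 (U, V) = (\<lambda>x. x + 26) \<and> c 2 (V, W) = (\<lambda>x. x)"

definition admissible_cost :: "(real \<Rightarrow> real) \<Rightarrow> bool" where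
  "admissible_cost f \<longleftrightarrow> (\<forall>x\<ge>0. 0 \<le> f x) \<and> continuous_on {0..} f \<and> strict_mono_on {0..} f"

end

theory Submission
  imports Defs
begin

lemma meas_Ico: "(a::real) \<le> b \<Longrightarrow> measure lebesgue {a..<b} = b - a" by force

lemma route_cases:
  assumes "is_route s t p"
  shows "p = [s,t] \<or> (\<exists>x. x \<noteq> s \<and> x \<noteq> t \<and> p = [s,x,t])"
proof -
  have d: "distinct p" "2 \<le> length p" "hd p = s" "last p = t" using assms unfolding is_route_def by auto
  obtain a b r where p: "p = a # b # r" using d(2) by (cases p; cases "tl p"; auto)
  show ?thesis
  proof (cases r)
    case Nil then show ?thesis using d p by auto
  next
    case (Cons c r')
    show ?thesis
    proof (cases r')
      case Nil then show ?thesis using d p Cons by auto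
    next
      case (Cons e r'')
      have "distinct [a,b,c,e]" using d(1) p \<open>r = c # r'\<close> Cons by auto
      hence False by (cases a; cases b; cases c; cases e; simp)
      thus ?thesis ..
    qed
  qed
qed

lemma flow_set:
  assumes "\<forall>i\<in>I_uv. \<sigma> i = p1" "\<forall>i\<in>I_uw. \<sigma> i = p2" "\<forall>i\<in>I_wv. \<sigma> i = p3"
  shows "{i\<in>users. a \<in> route_arcs (\<sigma> i)} =
     (if a \<in> route_arcs p1 then I_uv else {}) \<union> (if a \<in> route_arcs p2 then I_uw else {})
     \<union> (if a \<in> route_arcs p3 then I_wv else {})"
  using assms unfolding users_def by auto

lemma flow_gen:
  assumes "\<forall>i\<in>I_uv. \<sigma> i = p1" "\<forall>i\<in>I_uw. \<sigma> i = p2" "\<forall>i\<in>I_wv. \<sigma> i = p3"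
  shows "arc_flow users \<sigma> a =
     (if a \<in> route_arcs p1 then 3/2 else 0) + (if a \<in> route_arcs p2 then 1 else 0)
     + (if a \<in> route_arcs p3 then 1 else 0)"
    and "{i\<in>users. a \<in> route_arcs (\<sigma> i)} \<in> sets lebesgue"
proof -
  define A where "A = (if a \<in> route_arcs p1 then I_uv else {})"
  define B where "B = (if a \<in> route_arcs p2 then I_uw else {})"
  define C where "C = (if a \<in> route_arcs p3 then I_wv else {})"
  have eq: "{i\<in>users. a \<in> route_arcs (\<sigma> i)} = A \<union> B \<union> C"
    unfolding A_def B_def C_def by (rule flow_set[OF assms])
  have sA: "A \<in> sets lebesgue" "B \<in> sets lebesgue" "C \<in> sets lebesgue"
    unfolding A_def B_def C_def I_uv_def I_uw_def I_wv_def by auto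
  have fA: "emeasure lebesgue A \<noteq> \<infinity>" "emeasure lebesgue B \<noteq> \<infinity>" "emeasure lebesgue C \<noteq> \<infinity>"
    unfolding A_def B_def C_def I_uv_def I_uw_def I_wv_def by auto
  have mA: "measure lebesgue A = (if a \<in> route_arcs p1 then 3/2 else 0)"
    "measure lebesgue B = (if a \<in> route_arcs p2 then 1 else 0)"
    "measure lebesgue C = (if a \<in> route_arcs p3 then 1 else 0)"
    unfolding A_def B_def C_def I_uv_def I_uw_def I_wv_def by (auto simp: meas_Ico)
  have dj: "A \<inter> B = {}" "(A \<union> B) \<inter> C = {}"
    unfolding A_def B_def C_def I_uv_def I_uw_def I_wv_def by auto
  have fAB: "emeasure lebesgue (A \<union> B) \<noteq> \<infinity>"
    using fA sA by (metis emeasure_subadditive ennreal_add_eq_top infinity_ennreal_def neq_top_trans)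
  show "arc_flow users \<sigma> a = (if a \<in> route_arcs p1 then 3/2 else 0) + (if a \<in> route_arcs p2 then 1 else 0)
     + (if a \<in> route_arcs p3 then 1 else 0)"
    unfolding arc_flow_def eq
    using measure_Union[OF fAB fA(3) _ sA(3) dj(2)] measure_Union[OF fA(1,2) sA(1,2) dj(1)] sA mA
    by simp
  show "{i\<in>users. a \<in> route_arcs (\<sigma> i)} \<in> sets lebesgue" using eq sA by simp
qed

lemma sig_pieces:
  "\<forall>i\<in>I_uv. sigma_ex i = [U,V]" "\<forall>i\<in>I_uw. sigma_ex i = [U,W]" "\<forall>i\<in>I_wv. sigma_ex i = [W,V]"
  "\<forall>i\<in>I_uv. sigma_hat_ex i = [U,W,V]" "\<forall>i\<in>I_uw. sigma_hat_ex i = [U,V,W]" "\<forall>i\<in>I_wv. sigma_hat_ex i = [W,U,V]"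
  unfolding sigma_ex_def sigma_hat_ex_def I_uv_def I_uw_def I_wv_def by auto

lemma ra: "route_arcs [x,y] = {(x,y)}" "route_arcs [x,y,z] = {(x,y),(y,z)}"
  unfolding route_arcs_def by auto

lemmas fl = flow_gen(1)[OF sig_pieces(1-3)] flow_gen(1)[OF sig_pieces(4-6)]

lemma user_cases: "i \<in> users \<Longrightarrow>
  (i \<in> I_uv \<and> od_ex i = (U,V) \<and> cls_ex i = 1 \<and> sigma_ex i = [U,V] \<and> sigma_hat_ex i = [U,W,V]) \<or>
  (i \<notin> I_uv \<and> i \<in> I_uw \<and> od_ex i = (U,W) \<and> cls_ex i = 2 \<and> sigma_ex i = [U,W] \<and> sigma_hat_ex i = [U,V,W]) \<or>
  (i \<notin> I_uv \<and> i \<notin> I_uw \<and> od_ex i = (W,V) \<and> cls_ex i = 2 \<and> sigma_ex i = [W,V] \<and> sigma_hat_ex i = [W,U,V])"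
  unfolding users_def od_ex_def cls_ex_def sigma_ex_def sigma_hat_ex_def by auto

lemma isr: "is_route s t [s,t] \<longleftrightarrow> s \<noteq> t" "x \<noteq> s \<Longrightarrow> x \<noteq> t \<Longrightarrow> s \<noteq> t \<Longrightarrow> is_route s t [s,x,t]"
  unfolding is_route_def route_arcs_def G_arcs_def by auto

theorem mainTheorem16:
  fixes c :: "nat \<Rightarrow> arc \<Rightarrow> real \<Rightarrow> real"
  assumes "specified_costs c"
    and "\<And>k a. k \<in> {1, 2} \<Longrightarrow> a \<in> G_arcs \<Longrightarrow> admissible_cost (c k a)"
  shows "equilibrium users od_ex cls_ex c sigma_ex
       \<and> equilibrium users od_ex cls_ex c sigma_hat_ex
       \<and> arc_flow users sigma_ex (U, V) = 3/2
       \<and> arc_flow users sigma_hat_ex (U, V) = 2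
       \<and> arc_flow users sigma_ex \<noteq> arc_flow users sigma_hat_ex"
proof -
  have c: "c 1 (U, W) = (\<lambda>x. x)" "c 1 (W, V) = (\<lambda>x. x + 48)" "c 1 (U, V) = (\<lambda>x. 24 * x + 7)"
     "c 2 (U, W) = (\<lambda>x. 22 * x)" "c 2 (W, V) = (\<lambda>x. 22 * x)" "c 2 (W, U) = (\<lambda>x. x)"
     "c 2 (U, V) = (\<lambda>x. x + 26)" "c 2 (V, W) = (\<lambda>x. x)"
    using assms(1) unfolding specified_costs_def by auto
  note c = c c(1-3)[unfolded One_nat_def]
  have sp1: "strategy_profile users od_ex sigma_ex"
    unfolding strategy_profile_def
  proof (intro conjI ballI allI)
    fix i assume "i \<in> users" then show "is_route (fst (od_ex i)) (snd (od_ex i)) (sigma_ex i)"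
      using user_cases[of i] isr by auto
  next
    fix a show "{i \<in> users. a \<in> route_arcs (sigma_ex i)} \<in> sets lebesgue"
      by (rule flow_gen(2)[OF sig_pieces(1-3)])
  qed
  have sp2: "strategy_profile users od_ex sigma_hat_ex"
    unfolding strategy_profile_def
  proof (intro conjI ballI allI)
    fix i assume "i \<in> users" then show "is_route (fst (od_ex i)) (snd (od_ex i)) (sigma_hat_ex i)"
      using user_cases[of i] isr by auto
  next
    fix a show "{i \<in> users. a \<in> route_arcs (sigma_hat_ex i)} \<in> sets lebesgue"
      by (rule flow_gen(2)[OF sig_pieces(4-6)])
  qed
  have e1: "equilibrium users od_ex cls_ex c sigma_ex"
    unfolding equilibrium_def
  proof (intro conjI sp1 ballI allI impI)
    fix i p assume i: "i \<in> users" and r: "is_route (fst (od_ex i)) (snd (od_ex i)) p"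
    show "route_cost c (cls_ex i) (arc_flow users sigma_ex) (sigma_ex i)
          \<le> route_cost c (cls_ex i) (arc_flow users sigma_ex) p"
      using user_cases[OF i] route_cases[OF r]
      apply (auto simp: route_cost_def ra fl c)
      apply (case_tac x; simp add: route_cost_def ra fl c)+
      done
  qed
  have e2: "equilibrium users od_ex cls_ex c sigma_hat_ex"
    unfolding equilibrium_def
  proof (intro conjI sp2 ballI allI impI)
    fix i p assume i: "i \<in> users" and r: "is_route (fst (od_ex i)) (snd (od_ex i)) p"
    show "route_cost c (cls_ex i) (arc_flow users sigma_hat_ex) (sigma_hat_ex i)
          \<le> route_cost c (cls_ex i) (arc_flow users sigma_hat_ex) p"
      using user_cases[OF i] route_cases[OF r]
      apply (auto simp: route_cost_def ra fl c)
      apply (case_tac x; simp add: route_cost_def ra fl c)+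
      done
  qed
  have f1: "arc_flow users sigma_ex (U, V) = 3/2" by (simp add: fl ra)
  have f2: "arc_flow users sigma_hat_ex (U, V) = 2" by (simp add: fl ra)
  have ne: "arc_flow users sigma_ex \<noteq> arc_flow users sigma_hat_ex"
  proof
    assume "arc_flow users sigma_ex = arc_flow users sigma_hat_ex"
    hence "arc_flow users sigma_ex (U, V) = arc_flow users sigma_hat_ex (U, V)" by simp
    thus False using f1 f2 by simp
  qed
  show ?thesis using e1 e2 f1 f2 ne by blast
qed
end
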